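(* Let $d\ge 1$ and let $D_d=\langle x,y\mid y^2=1,\ x^d=1,\ y^{-1}xy=x^{-1}\rangle$ be the dihedral group of order $2d$. Let $I=\{0,1,\dots,\lfloor d/2\rfloor\}$; for $a\in I$ let $r_a=1$ if $2a\equiv 0\pmod d$ and $r_a=2$ otherwise, and $s_a=2/r_a$. For an integer $c$ let $\bar c\in I$ be the element with $\bar c\equiv c$ or $\bar c\equiv -c \pmod d$, and put $r_c:=r_{\bar c}$, $s_c:=s_{\bar c}$, $S_{c,\gamma}:=S_{\bar c,\gamma}$. The irreducible characters of $D_d$ are $\theta_{a,\alpha}$ for $a\in I$, $0\le\alpha<s_a$, where, with $\omega=e^{2\pi i/d}$, $\theta_{a,\alpha}(y^jx^i)=(-1)^{j\alpha}\sum_{s\in\{a,-a\}\bmod d}\omega^{si}$ if $r_a\mid j$ and $0$ otherwise (the sum over the set of residues $\{a \bmod d,-a\bmod d\}$). A quasigroup $Q$ of order $2d$ is a balanced cover of the weighted character quasigroup of $D_d$ if and only if there exist pairwise disjoint subsets $S_{a,\alpha}\subseteq Q$ with $|S_{a,\alpha}|=r_a^2$, for $a\in I$ and $0\le\alpha<s_a$, such that for all $a,b\in I$, $0\le\alpha<s_a$, $0\le\beta<s_b$, $$S_{a,\alpha}\cdot S_{b,\beta}=r_a\gcd(r_a,r_b)\sum_{i=0}^{r_b-1}\ \sum_{\gamma}\frac{S_{a+b(-1)^i,\gamma}}{r_{a+b(-1)^i}},$$ where the inner sum runs over all $0\le\gamma<s_{a+b(-1)^i}$ with $\alpha+\beta-\gamma\equiv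 0\pmod{\gcd(s_a,s_b)}$.
   Context: For subsets $A,B$ of $Q$, $A\cdot B=\sum_{a\in A,b\in B}ab$ is the formal sum in the free module on $Q$ (recording multiplicities), and a subset is identified with the sum of its elements; the displayed equation is an equality of formal linear combinations of elements of $Q$ with rational coefficients. The scalar product of class functions is $\langle\theta\mid\varphi\rangle=\frac{1}{|G|}\sum_{g}\theta(g)\overline{\varphi(g)}$. The weighted character quasigroup of a finite group $G$ has underlying set the irreducible characters, weights $w(\theta)=\theta(1)^2$, and multiplication function $\alpha(\theta_i,\theta_j,\theta_k)=\theta_i(1)\theta_j(1)\theta_k(1)\langle\theta_i\theta_j\mid\theta_k\rangle$. A quasigroup $Q$ of order $|G|$ covers it if there is a surjection $f$ from $Q$ onto the irreducible characters with $|f^{-1}\{\theta\}|=\theta(1)^2$ and $|\{(a,b)\in f^{-1}\{\theta_i\}\times f^{-1}\{\theta_j\}: f(ab)=\theta_k\}|=\alpha(\theta_i,\theta_j,\theta_k)$ for all $i,j,k$; the cover is balanced if for all $i,j$ and all $q\in Q$ the number of pairs $(a,b)\in f^{-1}\{\theta_i\}\times f^{-1}\{\theta_j\}$ with $ab=q$ depends only on $f(q)$. *)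

theory Defs
  imports Complex_Main
begin

text \<open>Elements of D_d are written y^j x^i with j in {0,1}, i in {0..<d};
  we represent y^j x^i by the pair (j, i).  Using x y = y x^-1 one gets
  (y^j x^i)(y^k x^l) = y^(j+k) x^((-1)^k i + l).\<close>

definition dih_carrier :: "nat \<Rightarrow> (nat \<times> nat) set" where
  "dih_carrier d = {0, 1} \<times> {0..<d}"

definition dih_mult :: "nat \<Rightarrow> nat \<times> nat \<Rightarrow> nat \<times> nat \<Rightarrow> nat \<times> nat" where
  "dih_mult d g h = (case g of (j, i) \<Rightarrow> case h of (k, l) \<Rightarrow>
     ((j + k) mod 2, nat ((((-1::int) ^ k) * int i + int l) mod int d)))"

definition dih_one :: "nat \<times> nat" where
  "dih_one = (0, 0)"

definition idx :: "nat \<Rightarrow> nat set" where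
  "idx d = {0 .. d div 2}"

definition r_idx :: "nat \<Rightarrow> nat \<Rightarrow> nat" where
  "r_idx d a = (if (2 * a) mod d = 0 then 1 else 2)"

definition s_idx :: "nat \<Rightarrow> nat \<Rightarrow> nat" where
  "s_idx d a = 2 div r_idx d a"

definition bar :: "nat \<Rightarrow> int \<Rightarrow> nat" where
  "bar d c = (let m = nat (c mod int d) in if m \<le> d div 2 then m else d - m)"

definition omega :: "nat \<Rightarrow> complex" where
  "omega d = exp (2 * pi * \<i> / of_nat d)"

definition theta :: "nat \<Rightarrow> nat \<Rightarrow> nat \<Rightarrow> nat \<times> nat \<Rightarrow> complex" where
  "theta d a al g = (case g of (j, i) \<Rightarrow>
     if r_idx d a dvd j
     then (-1) ^ (j * al) *
          (\<Sum>s \<in> {nat (int a mod int d), nat ((- int a) mod int d)}. omega d ^ (s * i))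
     else 0)"

definition Irr :: "nat \<Rightarrow> (nat \<times> nat \<Rightarrow> complex) set" where
  "Irr d = {theta d a al | a al. a \<in> idx d \<and> al < s_idx d a}"

definition cf_inner :: "nat \<Rightarrow> (nat \<times> nat \<Rightarrow> complex) \<Rightarrow> (nat \<times> nat \<Rightarrow> complex) \<Rightarrow> complex" where
  "cf_inner d th ph = (\<Sum>g \<in> dih_carrier d. th g * cnj (ph g)) / of_nat (card (dih_carrier d))"

definition char_deg :: "(nat \<times> nat \<Rightarrow> complex) \<Rightarrow> complex" where
  "char_deg th = th dih_one"

definition wcq_weight :: "(nat \<times> nat \<Rightarrow> complex) \<Rightarrow> complex" where
  "wcq_weight th = char_deg th ^ 2"

definition wcq_mult :: "nat \<Rightarrow> (nat \<times> nat \<Rightarrow> complex) \<Rightarrow> (nat \<times> nat \<Rightarrow> complex)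
    \<Rightarrow> (nat \<times> nat \<Rightarrow> complex) \<Rightarrow> complex" where
  "wcq_mult d ti tj tk =
     char_deg ti * char_deg tj * char_deg tk * cf_inner d (\<lambda>g. ti g * tj g) tk"

definition quasigroup :: "'q set \<Rightarrow> ('q \<Rightarrow> 'q \<Rightarrow> 'q) \<Rightarrow> bool" where
  "quasigroup Q m \<longleftrightarrow> (\<forall>a\<in>Q. \<forall>b\<in>Q. m a b \<in> Q) \<and>
     (\<forall>a\<in>Q. bij_betw (m a) Q Q \<and> bij_betw (\<lambda>x. m x a) Q Q)"

definition is_cover :: "nat \<Rightarrow> 'q set \<Rightarrow> ('q \<Rightarrow> 'q \<Rightarrow> 'q) \<Rightarrow> ('q \<Rightarrow> (nat \<times> nat \<Rightarrow> complex)) \<Rightarrow> bool" where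
  "is_cover d Q m f \<longleftrightarrow>
     f ` Q = Irr d \<and>
     (\<forall>th \<in> Irr d. of_nat (card {q \<in> Q. f q = th}) = wcq_weight th) \<and>
     (\<forall>ti \<in> Irr d. \<forall>tj \<in> Irr d. \<forall>tk \<in> Irr d.
        of_nat (card {(a, b). a \<in> Q \<and> b \<in> Q \<and> f a = ti \<and> f b = tj \<and> f (m a b) = tk})
          = wcq_mult d ti tj tk)"

definition is_balanced :: "'q set \<Rightarrow> ('q \<Rightarrow> 'q \<Rightarrow> 'q) \<Rightarrow> ('q \<Rightarrow> (nat \<times> nat \<Rightarrow> complex)) \<Rightarrow> (nat \<times> nat \<Rightarrow> complex) set \<Rightarrow> bool" where
  "is_balanced Q m f Ir \<longleftrightarrow>
     (\<forall>ti \<in> Ir. \<forall>tj \<in> Ir. \<forall>q \<in> Q. \<forall>q' \<in> Q. f q = f q' \<longrightarrow>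
        card {(a, b). a \<in> Q \<and> b \<in> Q \<and> f a = ti \<and> f b = tj \<and> m a b = q}
      = card {(a, b). a \<in> Q \<and> b \<in> Q \<and> f a = ti \<and> f b = tj \<and> m a b = q'})"

definition balanced_cover_dihedral :: "nat \<Rightarrow> 'q set \<Rightarrow> ('q \<Rightarrow> 'q \<Rightarrow> 'q) \<Rightarrow> bool" where
  "balanced_cover_dihedral d Q m \<longleftrightarrow>
     (\<exists>f. is_cover d Q m f \<and> is_balanced Q m f (Irr d))"

text \<open>Coefficient of q in the formal sum A . B.\<close>
definition set_prod_coeff :: "('q \<Rightarrow> 'q \<Rightarrow> 'q) \<Rightarrow> 'q set \<Rightarrow> 'q set \<Rightarrow> 'q \<Rightarrow> nat" where
  "set_prod_coeff m A B q = card {(x, y). x \<in> A \<and> y \<in> B \<and> m x y = q}"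

definition rhs_coeff :: "nat \<Rightarrow> (nat \<Rightarrow> nat \<Rightarrow> 'q set) \<Rightarrow> nat \<Rightarrow> nat \<Rightarrow> nat \<Rightarrow> nat \<Rightarrow> 'q \<Rightarrow> rat" where
  "rhs_coeff d S a al b be q =
     of_nat (r_idx d a * gcd (r_idx d a) (r_idx d b)) *
     (\<Sum>i < r_idx d b.
        (let c = bar d (int a + int b * (-1) ^ i) in
          \<Sum>ga \<in> {ga. ga < s_idx d c \<and> (al + be) mod gcd (s_idx d a) (s_idx d b) = ga mod gcd (s_idx d a) (s_idx d b)}.
             (if q \<in> S c ga then 1 else 0) / of_nat (r_idx d c)))"

end

theory Submission
  imports Defs "HOL-Analysis.Complex_Transcendental"
begin


lemma omega_pow: "omega d ^ k = exp (\<i> * complex_of_real (2 * pi * real k / real d))"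
  unfolding omega_def by (simp add: exp_of_nat_mult[symmetric] field_simps)

lemma omega_pow_eq_1:
  assumes "d \<ge> 1" shows "omega d ^ k = 1 \<longleftrightarrow> d dvd k"
proof
  assume h: "omega d ^ k = 1"
  then obtain n :: int where n: "2 * pi * real k / real d = of_int (2 * n) * pi"
    unfolding omega_pow exp_eq_1 by auto
  then have "real k = real d * of_int n" using assms by (simp add: field_simps)
  then have "int k = int d * n" by (metis of_int_eq_iff of_int_mult of_int_of_nat_eq)
  then show "d dvd k" by (metis dvd_triv_left int_dvd_int_iff)
next
  assume "d dvd k"
  then obtain n where "k = d * n" by auto
  then have "omega d ^ k = (omega d ^ d) ^ n" by (simp add: power_mult)
  moreover have "omega d ^ d = 1" using assms unfolding omega_pow
    by (simp add: exp_eq_1)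
  ultimately show "omega d ^ k = 1" by simp
qed

lemma omega_d: "d \<ge> 1 \<Longrightarrow> omega d ^ d = 1"
  using omega_pow_eq_1 by auto

lemma sum_omega:
  assumes "d \<ge> 1"
  shows "(\<Sum>i<d. omega d ^ (k * i)) = (if d dvd k then of_nat d else 0)"
proof (cases "d dvd k")
  case True
  then have "omega d ^ k = 1" using omega_pow_eq_1[OF assms] by simp
  then have "omega d ^ (k * i) = 1" for i by (simp add: power_mult)
  with True show ?thesis by simp
next
  case False
  then have ne: "omega d ^ k \<noteq> 1" using omega_pow_eq_1[OF assms] by simp
  have "(\<Sum>i<d. omega d ^ (k * i)) = (\<Sum>i<d. (omega d ^ k) ^ i)" by (simp add: power_mult)
  also have "\<dots> = ((omega d ^ k) ^ d - 1) / (omega d ^ k - 1)"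
    using geometric_sum[OF ne] by simp
  also have "(omega d ^ k) ^ d = 1"
    by (metis omega_d[OF assms] power_mult power_mult_distrib power_one mult.commute power_mult)
  finally show ?thesis using False by simp
qed

lemma cnj_omega_pow: "d \<ge> 1 \<Longrightarrow> cnj (omega d ^ k) = omega d ^ (k * (d - 1))"
proof -
  assume d: "d \<ge> 1"
  have "cnj (omega d) * omega d = 1"
    unfolding omega_def exp_cnj by (simp add: exp_add[symmetric])
  moreover have "omega d ^ (d - 1) * omega d = 1"
    using omega_d[OF d] d by (metis power_Suc2 Suc_diff_1 less_le_trans zero_less_one)
  moreover have "omega d \<noteq> 0" unfolding omega_def by simp
  ultimately have "cnj (omega d) = omega d ^ (d - 1)" by (metis mult_right_cancel)
  then show ?thesis by (metis complex_cnj_power power_mult mult.commute)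
qed



lemma dvd_shift: "(d::nat) \<ge> 1 \<Longrightarrow> d dvd (s + t + u * (d - 1)) \<longleftrightarrow> int d dvd (int s + int t - int u)"
proof -
  assume d: "d \<ge> 1"
  have "int (u * (d - 1)) = int u * int d - int u" using d by (simp add: of_nat_diff algebra_simps)
  then have "int (s + t + u * (d - 1)) = (int s + int t - int u) + int d * int u"
    by (simp add: algebra_simps)
  then have "int d dvd int (s + t + u * (d - 1)) \<longleftrightarrow> int d dvd (int s + int t - int u)"
    by (metis dvd_add_times_triv_right_iff mult.commute)
  then show ?thesis by (metis int_dvd_int_iff)
qed

lemma triple_sum:
  assumes d: "d \<ge> 1" and fin: "finite A" "finite B" "finite C"
  shows "(\<Sum>i<d. (\<Sum>s\<in>A. omega d ^ (s*i)) * (\<Sum>t\<in>B. omega d ^ (t*i)) * cnj (\<Sum>u\<in>C. omega d ^ (u*i)))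
    = of_nat d * of_nat (\<Sum>u\<in>C. \<Sum>t\<in>B. \<Sum>s\<in>A. if int d dvd (int s + int t - int u) then 1 else 0)"
proof -
  have eq1: "(\<Sum>s\<in>A. omega d ^ (s*i)) * (\<Sum>t\<in>B. omega d ^ (t*i)) * cnj (\<Sum>u\<in>C. omega d ^ (u*i))
     = (\<Sum>u\<in>C. \<Sum>t\<in>B. \<Sum>s\<in>A. omega d ^ ((s + t + u * (d - 1)) * i))" for i
  proof -
    have "cnj (\<Sum>u\<in>C. omega d ^ (u*i)) = (\<Sum>u\<in>C. omega d ^ (u * (d - 1) * i))"
      using cnj_omega_pow[OF d] by (simp add: ac_simps)
    then show ?thesis
      by (simp add: sum_distrib_left sum_distrib_right power_add add_mult_distrib mult.assoc)
  qed
  have "(\<Sum>i<d. (\<Sum>u\<in>C. \<Sum>t\<in>B. \<Sum>s\<in>A. omega d ^ ((s + t + u * (d - 1)) * i)))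
      = (\<Sum>u\<in>C. \<Sum>t\<in>B. \<Sum>s\<in>A. \<Sum>i<d. omega d ^ ((s + t + u * (d - 1)) * i))"
    by (simp add: sum.swap[of _ "{..<d}"])
  also have "\<dots> = (\<Sum>u\<in>C. \<Sum>t\<in>B. \<Sum>s\<in>A. if int d dvd (int s + int t - int u) then of_nat d else 0)"
    using sum_omega[OF d] dvd_shift[OF d] by simp
  also have "\<dots> = of_nat d * of_nat (\<Sum>u\<in>C. \<Sum>t\<in>B. \<Sum>s\<in>A. if int d dvd (int s + int t - int u) then 1 else 0)"
    by (simp add: sum_distrib_left of_nat_sum if_distrib[of "\<lambda>x. of_nat d * x"] if_distrib[of of_nat] cong: if_cong)
  finally show ?thesis using eq1 by simp
qed



definition Aset :: "nat \<Rightarrow> nat \<Rightarrow> nat set" where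
  "Aset d a = {nat (int a mod int d), nat ((- int a) mod int d)}"

definition Tcnt :: "nat \<Rightarrow> nat \<Rightarrow> nat \<Rightarrow> nat \<Rightarrow> nat" where
  "Tcnt d a b c = (\<Sum>u\<in>Aset d c. \<Sum>t\<in>Aset d b. \<Sum>s\<in>Aset d a. if int d dvd (int s + int t - int u) then 1 else 0)"

lemma r_idx_cases: "r_idx d a = 1 \<or> r_idx d a = 2"
  unfolding r_idx_def by auto

lemma theta_0: "theta d a al (0, i) = (\<Sum>s\<in>Aset d a. omega d ^ (s * i))"
  unfolding theta_def Aset_def by simp

lemma theta_1: "theta d a al (Suc 0, i) =
   (if r_idx d a = 1 then (-1) ^ al * (\<Sum>s\<in>Aset d a. omega d ^ (s * i)) else 0)"
  using r_idx_cases[of d a] unfolding theta_def Aset_def by auto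

lemma card_dih: "card (dih_carrier d) = 2 * d"
  unfolding dih_carrier_def by (simp add: card_cartesian_product)

lemma sum_dih: "(\<Sum>g\<in>dih_carrier d. F g) = (\<Sum>i<d. F (0, i)) + (\<Sum>i<d. F (Suc 0, i))"
proof -
  have "(\<Sum>g\<in>dih_carrier d. F g) = (\<Sum>j\<in>{0,1::nat}. \<Sum>i\<in>{0..<d}. F (j, i))"
    unfolding dih_carrier_def by (simp add: sum.cartesian_product)
  then show ?thesis by (simp add: atLeast0LessThan)
qed

lemma inner_formula:
  assumes d: "d \<ge> 1"
  shows "cf_inner d (\<lambda>g. theta d a al g * theta d b be g) (theta d c ga)
    = of_nat (Tcnt d a b c) * (1 + (if r_idx d a = 1 \<and> r_idx d b = 1 \<and> r_idx d c = 1
         then (-1) ^ (al + be + ga) else 0)) / 2"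
proof -
  define X where "X = (\<lambda>a i. (\<Sum>s\<in>Aset d a. omega d ^ (s * i)))"
  have fin: "finite (Aset d x)" for x unfolding Aset_def by simp
  have base: "(\<Sum>i<d. X a i * X b i * cnj (X c i)) = of_nat d * of_nat (Tcnt d a b c)"
    unfolding X_def Tcnt_def by (rule triple_sum[OF d fin fin fin])
  have s0: "(\<Sum>i<d. theta d a al (0, i) * theta d b be (0, i) * cnj (theta d c ga (0, i)))
     = of_nat d * of_nat (Tcnt d a b c)"
    using base unfolding theta_0 X_def by simp
  have s1: "(\<Sum>i<d. theta d a al (Suc 0, i) * theta d b be (Suc 0, i) * cnj (theta d c ga (Suc 0, i)))
     = (if r_idx d a = 1 \<and> r_idx d b = 1 \<and> r_idx d c = 1
         then (-1) ^ (al + be + ga) else 0) * (of_nat d * of_nat (Tcnt d a b c))"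
  proof (cases "r_idx d a = 1 \<and> r_idx d b = 1 \<and> r_idx d c = 1")
    case True
    have "(\<Sum>i<d. theta d a al (Suc 0, i) * theta d b be (Suc 0, i) * cnj (theta d c ga (Suc 0, i)))
      = (\<Sum>i<d. (-1) ^ (al + be + ga) * (X a i * X b i * cnj (X c i)))"
      using True unfolding theta_1 X_def by (simp add: power_add algebra_simps)
    also have "\<dots> = (-1) ^ (al + be + ga) * (of_nat d * of_nat (Tcnt d a b c))"
      by (simp add: sum_distrib_left[symmetric] base)
    finally show ?thesis using True by simp
  next
    case False
    then show ?thesis unfolding theta_1 by auto
  qed
  show ?thesis
    unfolding cf_inner_def card_dih sum_dih s0 s1 using d
    by (simp add: field_simps)
qed



definition Sg :: "nat \<Rightarrow> nat \<Rightarrow> int list" where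
  "Sg d a = (if r_idx d a = 1 then [1] else [1, -1])"

lemma r1_iff: "r_idx d a = 1 \<longleftrightarrow> d dvd 2 * a"
  unfolding r_idx_def by auto

lemma neg_mod_eq_iff:
  assumes d: "d \<ge> 1"
  shows "nat ((- int a) mod int d) = nat (int a mod int d) \<longleftrightarrow> d dvd 2 * a"
proof -
  have "nat ((- int a) mod int d) = nat (int a mod int d) \<longleftrightarrow> (- int a) mod int d = int a mod int d"
    using d by (simp add: eq_nat_nat_iff)
  also have "\<dots> \<longleftrightarrow> int d dvd (- int a - int a)"
    by (rule mod_eq_dvd_iff)
  also have "\<dots> \<longleftrightarrow> int d dvd int (2 * a)"
    by (metis dvd_minus_iff minus_diff_eq diff_minus_eq_add mult_2 of_nat_add of_nat_mult of_nat_numeral)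
  also have "\<dots> \<longleftrightarrow> d dvd 2 * a" by (rule int_dvd_int_iff)
  finally show ?thesis .
qed

lemma sum_Aset:
  assumes d: "d \<ge> 1"
  shows "(\<Sum>s\<in>Aset d a. g s) = sum_list (map (\<lambda>\<sigma>. g (nat ((\<sigma> * int a) mod int d))) (Sg d a))"
proof (cases "r_idx d a = 1")
  case True
  then have "nat ((- int a) mod int d) = nat (int a mod int d)"
    using neg_mod_eq_iff[OF d] r1_iff by auto
  then show ?thesis using True unfolding Aset_def Sg_def by simp
next
  case False
  then have "nat ((- int a) mod int d) \<noteq> nat (int a mod int d)"
    using neg_mod_eq_iff[OF d] r1_iff by auto
  then show ?thesis using False unfolding Aset_def Sg_def by simp
qed

lemma dvd_mod3: "(k::int) dvd (x mod k + y mod k - z mod k) \<longleftrightarrow> k dvd (x + y - z)"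
proof -
  have "(x mod k + y mod k - z mod k) mod k = (x mod k + y mod k - z) mod k"
    by (rule mod_diff_right_eq)
  also have "\<dots> = ((x mod k + y mod k) mod k - z) mod k"
    by (rule mod_diff_left_eq[symmetric])
  also have "\<dots> = ((x + y) mod k - z) mod k" by (simp only: mod_add_eq)
  also have "\<dots> = (x + y - z) mod k" by (rule mod_diff_left_eq)
  finally show ?thesis by (simp add: dvd_eq_mod_eq_0)
qed

lemma int_nat_mod: "d \<ge> 1 \<Longrightarrow> int (nat (x mod int d)) = x mod int d"
  by simp

lemma Tcnt_formula:
  assumes d: "d \<ge> 1"
  shows "Tcnt d a b c = (\<Sum>\<mu>\<leftarrow>Sg d c. \<Sum>\<tau>\<leftarrow>Sg d b. \<Sum>\<sigma>\<leftarrow>Sg d a.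
     if int d dvd (\<sigma> * int a + \<tau> * int b - \<mu> * int c) then 1 else 0)"
proof -
  have "Tcnt d a b c = (\<Sum>\<mu>\<leftarrow>Sg d c. \<Sum>\<tau>\<leftarrow>Sg d b. \<Sum>\<sigma>\<leftarrow>Sg d a.
     if int d dvd (int (nat ((\<sigma> * int a) mod int d)) + int (nat ((\<tau> * int b) mod int d))
        - int (nat ((\<mu> * int c) mod int d))) then 1 else 0)"
    unfolding Tcnt_def sum_Aset[OF d] ..
  also have "\<dots> = (\<Sum>\<mu>\<leftarrow>Sg d c. \<Sum>\<tau>\<leftarrow>Sg d b. \<Sum>\<sigma>\<leftarrow>Sg d a.
     if int d dvd (\<sigma> * int a + \<tau> * int b - \<mu> * int c) then 1 else 0)"
    unfolding int_nat_mod[OF d] dvd_mod3 ..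
  finally show ?thesis .
qed



definition Dv :: "nat \<Rightarrow> nat \<Rightarrow> nat \<Rightarrow> nat \<Rightarrow> int \<Rightarrow> int \<Rightarrow> int \<Rightarrow> bool" where
  "Dv d a b c \<sigma> \<tau> \<mu> \<longleftrightarrow> int d dvd (\<sigma> * int a + \<tau> * int b - \<mu> * int c)"

lemma Dv_neg: "Dv d a b c (-\<sigma>) (-\<tau>) (-\<mu>) = Dv d a b c \<sigma> \<tau> \<mu>"
proof -
  have eq: "(-\<sigma>) * int a + (-\<tau>) * int b - (-\<mu>) * int c = - (\<sigma> * int a + \<tau> * int b - \<mu> * int c)"
    by (simp add: algebra_simps)
  show ?thesis unfolding Dv_def eq dvd_minus_iff ..
qed

lemma Dv_simps [simp]:
  "Dv d a b c (-1) (-1) (-1) = Dv d a b c 1 1 1"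
  "Dv d a b c (-1) (-1) 1 = Dv d a b c 1 1 (-1)"
  "Dv d a b c (-1) 1 (-1) = Dv d a b c 1 (-1) 1"
  "Dv d a b c (-1) 1 1 = Dv d a b c 1 (-1) (-1)"
  using Dv_neg[of d a b c 1 1 1] Dv_neg[of d a b c 1 1 "-1"] Dv_neg[of d a b c 1 "-1" 1]
    Dv_neg[of d a b c 1 "-1" "-1"] by simp_all

lemma Tcnt_Dv:
  assumes d: "d \<ge> 1"
  shows "Tcnt d a b c = (\<Sum>\<mu>\<leftarrow>Sg d c. \<Sum>\<tau>\<leftarrow>Sg d b. \<Sum>\<sigma>\<leftarrow>Sg d a.
     if Dv d a b c \<sigma> \<tau> \<mu> then 1 else 0)"
  unfolding Tcnt_formula[OF d] Dv_def ..

lemma bar_arith: "(c::nat) \<le> d div 2 \<Longrightarrow> mn < d \<Longrightarrow>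
  (if mn \<le> d div 2 then mn else d - mn) = c \<longleftrightarrow> mn = c \<or> mn = (if c = 0 then 0 else d - c)"
proof -
  assume a: "c \<le> d div 2" "mn < d"
  have h: "2 * (d div 2) \<le> d" "d \<le> 2 * (d div 2) + 1" by auto
  show ?thesis using a h by (cases "mn \<le> d div 2") auto
qed

lemma bar_iff:
  assumes d: "d \<ge> 1" and c: "c \<in> idx d"
  shows "bar d x = c \<longleftrightarrow> int d dvd (x - int c) \<or> int d dvd (x + int c)"
proof -
  have cd: "c \<le> d div 2" using c unfolding idx_def by simp
  then have cd': "c < d" using d by linarith
  define mn where "mn = nat (x mod int d)"
  have xm: "x mod int d < int d" "0 \<le> x mod int d" using d by auto
  have mn: "int mn = x mod int d" "mn < d" using xm unfolding mn_def by (auto simp: nat_less_iff)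
  have "int d dvd (x - int c) \<longleftrightarrow> x mod int d = int c mod int d" by (simp add: mod_eq_dvd_iff)
  also have "\<dots> \<longleftrightarrow> mn = c" using cd' mn by auto
  finally have e1: "int d dvd (x - int c) \<longleftrightarrow> mn = c" .
  have "int d dvd (x + int c) \<longleftrightarrow> int d dvd (x - (- int c))" by simp
  also have "\<dots> \<longleftrightarrow> x mod int d = (- int c) mod int d" by (simp add: mod_eq_dvd_iff)
  also have "(- int c) mod int d = (if c = 0 then 0 else int d - int c)"
    using cd' by (simp add: zmod_zminus1_eq_if)
  also have "(x mod int d = (if c = 0 then 0 else int d - int c)) \<longleftrightarrow> mn = (if c = 0 then 0 else d - c)"
    using cd' mn by auto
  finally have e2: "int d dvd (x + int c) \<longleftrightarrow> mn = (if c = 0 then 0 else d - c)" .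
  have "bar d x = (if mn \<le> d div 2 then mn else d - mn)"
    unfolding bar_def mn_def Let_def ..
  then show ?thesis using bar_arith[OF cd mn(2)] e1 e2 by simp
qed


definition Nc :: "nat \<Rightarrow> nat \<Rightarrow> nat \<Rightarrow> nat \<Rightarrow> nat" where
  "Nc d a b c = (\<Sum>i < r_idx d b. if bar d (int a + int b * (-1) ^ i) = c then 1 else 0)"

lemma Nc_Dv:
  assumes d: "d \<ge> 1" and c: "c \<in> idx d"
  shows "Nc d a b c = (if r_idx d b = 1 then (if Dv d a b c 1 1 1 \<or> Dv d a b c 1 1 (-1) then 1 else 0)
     else (if Dv d a b c 1 1 1 \<or> Dv d a b c 1 1 (-1) then 1 else 0) +
          (if Dv d a b c 1 (-1) 1 \<or> Dv d a b c 1 (-1) (-1) then 1 else 0))"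
proof -
  have b1: "bar d (int a + int b) = c \<longleftrightarrow> Dv d a b c 1 1 1 \<or> Dv d a b c 1 1 (-1)"
    unfolding bar_iff[OF d c] Dv_def by (simp add: algebra_simps)
  have b2: "bar d (int a - int b) = c \<longleftrightarrow> Dv d a b c 1 (-1) 1 \<or> Dv d a b c 1 (-1) (-1)"
    unfolding bar_iff[OF d c] Dv_def by (simp add: algebra_simps)
  show ?thesis
  proof (cases "r_idx d b = 1")
    case True
    then show ?thesis unfolding Nc_def using b1 by simp
  next
    case False
    then have "r_idx d b = 2" using r_idx_cases by metis
    then show ?thesis unfolding Nc_def using b1 b2 False
      by (simp add: numeral_2_eq_2)
  qed
qed

lemma r1_int: "r_idx d x = 1 \<longleftrightarrow> int d dvd 2 * int x"
  unfolding r1_iff by (metis int_dvd_int_iff of_nat_mult of_nat_numeral)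

lemma dvd_lin: "(k::int) dvd x \<Longrightarrow> k dvd y \<Longrightarrow> z = x - y \<or> z = x + y \<Longrightarrow> k dvd z"
  by auto

lemma excl:
  "Dv d a b c 1 1 1 \<Longrightarrow> Dv d a b c 1 1 (-1) \<Longrightarrow> r_idx d c = 1"
  "Dv d a b c 1 (-1) 1 \<Longrightarrow> Dv d a b c 1 (-1) (-1) \<Longrightarrow> r_idx d c = 1"
  "Dv d a b c 1 1 1 \<Longrightarrow> Dv d a b c 1 (-1) 1 \<Longrightarrow> r_idx d b = 1"
  "Dv d a b c 1 1 (-1) \<Longrightarrow> Dv d a b c 1 (-1) (-1) \<Longrightarrow> r_idx d b = 1"
  "Dv d a b c 1 1 1 \<Longrightarrow> Dv d a b c 1 (-1) (-1) \<Longrightarrow> r_idx d a = 1"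
  "Dv d a b c 1 1 (-1) \<Longrightarrow> Dv d a b c 1 (-1) 1 \<Longrightarrow> r_idx d a = 1"
  unfolding r1_int Dv_def
  by (rule dvd_lin, assumption, assumption, simp add: algebra_simps)+

lemma equiv:
  "r_idx d c = 1 \<Longrightarrow> Dv d a b c 1 1 1 \<longleftrightarrow> Dv d a b c 1 1 (-1)"
  "r_idx d c = 1 \<Longrightarrow> Dv d a b c 1 (-1) 1 \<longleftrightarrow> Dv d a b c 1 (-1) (-1)"
  "r_idx d b = 1 \<Longrightarrow> Dv d a b c 1 1 1 \<longleftrightarrow> Dv d a b c 1 (-1) 1"
  "r_idx d b = 1 \<Longrightarrow> Dv d a b c 1 1 (-1) \<longleftrightarrow> Dv d a b c 1 (-1) (-1)"
  "r_idx d a = 1 \<Longrightarrow> Dv d a b c 1 1 1 \<longleftrightarrow> Dv d a b c 1 (-1) (-1)"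
  "r_idx d a = 1 \<Longrightarrow> Dv d a b c 1 1 (-1) \<longleftrightarrow> Dv d a b c 1 (-1) 1"
  unfolding r1_int Dv_def
  by (rule iffI; rule dvd_lin, assumption, assumption, simp add: algebra_simps)+



lemma s_idx_r: "s_idx d a = (if r_idx d a = 1 then 2 else 1)"
  unfolding s_idx_def using r_idx_cases[of d a] by auto

lemma lt2: "(x::nat) < 2 \<Longrightarrow> x = 0 \<or> x = 1" by auto

lemma key111:
  assumes d: "d \<ge> 1" and c: "c \<in> idx d"
    and al: "al < s_idx d a" and be: "be < s_idx d b" and ga: "ga < s_idx d c"
    and ra: "r_idx d a = 1" and rb: "r_idx d b = 1" and rc: "r_idx d c = 1"
  shows "of_nat (r_idx d b) * cf_inner d (\<lambda>g. theta d a al g * theta d b be g) (theta d c ga)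
    = of_nat (gcd (r_idx d a) (r_idx d b) * Nc d a b c *
        (if (al + be) mod gcd (s_idx d a) (s_idx d b) = ga mod gcd (s_idx d a) (s_idx d b) then 1 else 0))"
proof -
  note ex = excl[of d a b c] and eqv = equiv[where d=d and a=a and b=b and c=c]
  note base = inner_formula[OF d] Tcnt_Dv[OF d] Nc_Dv[OF d c] s_idx_r Sg_def
  have "al = 0 \<or> al = 1" "be = 0 \<or> be = 1" "ga = 0 \<or> ga = 1"
    using al be ga ra rb rc s_idx_r by (auto intro!: lt2)
  then show ?thesis using ra rb rc
    apply (elim disjE)
    apply (simp_all add: base)
    using ex[simplified ra rb rc, simplified] eqv[simplified ra rb rc, simplified] by blast+
qed


lemma key112:
  assumes d: "d \<ge> 1" and c: "c \<in> idx d"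
    and al: "al < s_idx d a" and be: "be < s_idx d b" and ga: "ga < s_idx d c"
    and ra: "r_idx d a = 1" and rb: "r_idx d b = 1" and rc: "r_idx d c = 2"
  shows "of_nat (r_idx d b) * cf_inner d (\<lambda>g. theta d a al g * theta d b be g) (theta d c ga)
    = of_nat (gcd (r_idx d a) (r_idx d b) * Nc d a b c *
        (if (al + be) mod gcd (s_idx d a) (s_idx d b) = ga mod gcd (s_idx d a) (s_idx d b) then 1 else 0))"
proof -
  note ex = excl[of d a b c] and eqv = equiv[where d=d and a=a and b=b and c=c]
  note base = inner_formula[OF d] Tcnt_Dv[OF d] Nc_Dv[OF d c] s_idx_r Sg_def
  show ?thesis using ra rb rc
    apply (simp add: base)
    using ex[simplified ra rb rc, simplified] eqv[simplified ra rb rc, simplified] by blast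
qed


lemma key121:
  assumes d: "d \<ge> 1" and c: "c \<in> idx d"
    and al: "al < s_idx d a" and be: "be < s_idx d b" and ga: "ga < s_idx d c"
    and ra: "r_idx d a = 1" and rb: "r_idx d b = 2" and rc: "r_idx d c = 1"
  shows "of_nat (r_idx d b) * cf_inner d (\<lambda>g. theta d a al g * theta d b be g) (theta d c ga)
    = of_nat (gcd (r_idx d a) (r_idx d b) * Nc d a b c *
        (if (al + be) mod gcd (s_idx d a) (s_idx d b) = ga mod gcd (s_idx d a) (s_idx d b) then 1 else 0))"
proof -
  note ex = excl[of d a b c] and eqv = equiv[where d=d and a=a and b=b and c=c]
  note base = inner_formula[OF d] Tcnt_Dv[OF d] Nc_Dv[OF d c] s_idx_r Sg_def
  show ?thesis using ra rb rc
    apply (simp add: base)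
    using ex[simplified ra rb rc, simplified] eqv[simplified ra rb rc, simplified] by blast
qed


lemma key122:
  assumes d: "d \<ge> 1" and c: "c \<in> idx d"
    and al: "al < s_idx d a" and be: "be < s_idx d b" and ga: "ga < s_idx d c"
    and ra: "r_idx d a = 1" and rb: "r_idx d b = 2" and rc: "r_idx d c = 2"
  shows "of_nat (r_idx d b) * cf_inner d (\<lambda>g. theta d a al g * theta d b be g) (theta d c ga)
    = of_nat (gcd (r_idx d a) (r_idx d b) * Nc d a b c *
        (if (al + be) mod gcd (s_idx d a) (s_idx d b) = ga mod gcd (s_idx d a) (s_idx d b) then 1 else 0))"
proof -
  note ex = excl[of d a b c] and eqv = equiv[where d=d and a=a and b=b and c=c]
  note base = inner_formula[OF d] Tcnt_Dv[OF d] Nc_Dv[OF d c] s_idx_r Sg_def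
  show ?thesis using ra rb rc
    apply (simp add: base)
    using ex[simplified ra rb rc, simplified] eqv[simplified ra rb rc, simplified] by blast
qed


lemma key211:
  assumes d: "d \<ge> 1" and c: "c \<in> idx d"
    and al: "al < s_idx d a" and be: "be < s_idx d b" and ga: "ga < s_idx d c"
    and ra: "r_idx d a = 2" and rb: "r_idx d b = 1" and rc: "r_idx d c = 1"
  shows "of_nat (r_idx d b) * cf_inner d (\<lambda>g. theta d a al g * theta d b be g) (theta d c ga)
    = of_nat (gcd (r_idx d a) (r_idx d b) * Nc d a b c *
        (if (al + be) mod gcd (s_idx d a) (s_idx d b) = ga mod gcd (s_idx d a) (s_idx d b) then 1 else 0))"
proof -
  note ex = excl[of d a b c] and eqv = equiv[where d=d and a=a and b=b and c=c]
  note base = inner_formula[OF d] Tcnt_Dv[OF d] Nc_Dv[OF d c] s_idx_r Sg_def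
  show ?thesis using ra rb rc
    apply (simp add: base)
    using ex[simplified ra rb rc, simplified] eqv[simplified ra rb rc, simplified] by blast
qed


lemma key212:
  assumes d: "d \<ge> 1" and c: "c \<in> idx d"
    and al: "al < s_idx d a" and be: "be < s_idx d b" and ga: "ga < s_idx d c"
    and ra: "r_idx d a = 2" and rb: "r_idx d b = 1" and rc: "r_idx d c = 2"
  shows "of_nat (r_idx d b) * cf_inner d (\<lambda>g. theta d a al g * theta d b be g) (theta d c ga)
    = of_nat (gcd (r_idx d a) (r_idx d b) * Nc d a b c *
        (if (al + be) mod gcd (s_idx d a) (s_idx d b) = ga mod gcd (s_idx d a) (s_idx d b) then 1 else 0))"
proof -
  note ex = excl[of d a b c] and eqv = equiv[where d=d and a=a and b=b and c=c]
  note base = inner_formula[OF d] Tcnt_Dv[OF d] Nc_Dv[OF d c] s_idx_r Sg_def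
  show ?thesis using ra rb rc
    apply (simp add: base)
    using ex[simplified ra rb rc, simplified] eqv[simplified ra rb rc, simplified] by blast
qed


lemma key221:
  assumes d: "d \<ge> 1" and c: "c \<in> idx d"
    and al: "al < s_idx d a" and be: "be < s_idx d b" and ga: "ga < s_idx d c"
    and ra: "r_idx d a = 2" and rb: "r_idx d b = 2" and rc: "r_idx d c = 1"
  shows "of_nat (r_idx d b) * cf_inner d (\<lambda>g. theta d a al g * theta d b be g) (theta d c ga)
    = of_nat (gcd (r_idx d a) (r_idx d b) * Nc d a b c *
        (if (al + be) mod gcd (s_idx d a) (s_idx d b) = ga mod gcd (s_idx d a) (s_idx d b) then 1 else 0))"
proof -
  note ex = excl[of d a b c] and eqv = equiv[where d=d and a=a and b=b and c=c]
  note base = inner_formula[OF d] Tcnt_Dv[OF d] Nc_Dv[OF d c] s_idx_r Sg_def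
  show ?thesis using ra rb rc
    apply (simp add: base)
    using ex[simplified ra rb rc, simplified] eqv[simplified ra rb rc, simplified] by blast
qed


lemma key222:
  assumes d: "d \<ge> 1" and c: "c \<in> idx d"
    and al: "al < s_idx d a" and be: "be < s_idx d b" and ga: "ga < s_idx d c"
    and ra: "r_idx d a = 2" and rb: "r_idx d b = 2" and rc: "r_idx d c = 2"
  shows "of_nat (r_idx d b) * cf_inner d (\<lambda>g. theta d a al g * theta d b be g) (theta d c ga)
    = of_nat (gcd (r_idx d a) (r_idx d b) * Nc d a b c *
        (if (al + be) mod gcd (s_idx d a) (s_idx d b) = ga mod gcd (s_idx d a) (s_idx d b) then 1 else 0))"
proof -
  note ex = excl[of d a b c] and eqv = equiv[where d=d and a=a and b=b and c=c]
  note base = inner_formula[OF d] Tcnt_Dv[OF d] Nc_Dv[OF d c] s_idx_r Sg_def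
  show ?thesis using ra rb rc
    apply (simp add: base)
    using ex[simplified ra rb rc, simplified] eqv[simplified ra rb rc, simplified] by blast
qed


lemma key:
  assumes d: "d \<ge> 1" and c: "c \<in> idx d"
    and al: "al < s_idx d a" and be: "be < s_idx d b" and ga: "ga < s_idx d c"
  shows "of_nat (r_idx d b) * cf_inner d (\<lambda>g. theta d a al g * theta d b be g) (theta d c ga)
    = of_nat (gcd (r_idx d a) (r_idx d b) * Nc d a b c *
        (if (al + be) mod gcd (s_idx d a) (s_idx d b) = ga mod gcd (s_idx d a) (s_idx d b) then 1 else 0))"
  using r_idx_cases[of d a] r_idx_cases[of d b] r_idx_cases[of d c]
    key111[OF assms] key112[OF assms] key121[OF assms] key122[OF assms]
    key211[OF assms] key212[OF assms] key221[OF assms] key222[OF assms]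
  by blast



lemma idx_lt: "d \<ge> 1 \<Longrightarrow> a \<in> idx d \<Longrightarrow> a < d"
  unfolding idx_def by auto

lemma char_deg_theta: "d \<ge> 1 \<Longrightarrow> char_deg (theta d a al) = of_nat (r_idx d a)"
proof -
  assume d: "d \<ge> 1"
  have "char_deg (theta d a al) = (\<Sum>s\<in>Aset d a. (1::complex))"
    unfolding char_deg_def dih_one_def theta_0 by simp
  also have "\<dots> = of_nat (r_idx d a)"
    unfolding sum_Aset[OF d] Sg_def using r_idx_cases[of d a] by auto
  finally show ?thesis .
qed

lemma theta00: "theta d 0 0 = (\<lambda>g. 1)"
  unfolding theta_def r_idx_def by (auto simp: fun_eq_iff)

lemma bar_idx: "d \<ge> 1 \<Longrightarrow> a \<in> idx d \<Longrightarrow> bar d (int a) = a"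
  unfolding bar_def idx_def Let_def by auto

lemma bar_in_idx: "d \<ge> 1 \<Longrightarrow> bar d x \<in> idx d"
proof -
  assume d: "d \<ge> 1"
  define mn where "mn = nat (x mod int d)"
  have xm: "x mod int d < int d" "0 \<le> x mod int d" using d by auto
  have mn: "mn < d" using xm unfolding mn_def by (auto simp: nat_less_iff)
  have h: "2 * (d div 2) \<le> d" "d \<le> 2 * (d div 2) + 1" by auto
  have "bar d x = (if mn \<le> d div 2 then mn else d - mn)"
    unfolding bar_def mn_def Let_def ..
  then show ?thesis unfolding idx_def using mn h by auto
qed

lemma ortho:
  assumes d: "d \<ge> 1" and a: "a \<in> idx d" and c: "c \<in> idx d"
    and al: "al < s_idx d a" and ga: "ga < s_idx d c"
  shows "cf_inner d (theta d a al) (theta d c ga) = (if a = c \<and> al = ga then 1 else 0)"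
proof -
  have z: "0 \<in> idx d" unfolding idx_def by simp
  have s0: "s_idx d 0 = 2" "r_idx d 0 = 1" unfolding s_idx_def r_idx_def by auto
  have k: "of_nat (r_idx d 0) * cf_inner d (\<lambda>g. theta d a al g * theta d 0 0 g) (theta d c ga)
    = of_nat (gcd (r_idx d a) (r_idx d 0) * Nc d a 0 c *
        (if (al + 0) mod gcd (s_idx d a) (s_idx d 0) = ga mod gcd (s_idx d a) (s_idx d 0) then 1 else 0))"
    by (rule key[OF d c al _ ga]) (simp add: s0)
  have nc: "Nc d a 0 c = (if a = c then 1 else 0)"
    unfolding Nc_def s0 using bar_idx[OF d a] by simp
  have g: "gcd (s_idx d a) 2 = s_idx d a" using s_idx_r[of d a] by auto
  show ?thesis
  proof (cases "a = c")
    case True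
    then show ?thesis using k nc g al ga unfolding theta00 s0 by auto
  next
    case False
    then show ?thesis using k nc unfolding theta00 s0 by auto
  qed
qed

lemma theta_inj:
  assumes d: "d \<ge> 1" and a: "a \<in> idx d" and c: "c \<in> idx d"
    and al: "al < s_idx d a" and ga: "ga < s_idx d c"
    and eq: "theta d a al = theta d c ga"
  shows "a = c \<and> al = ga"
proof (rule ccontr)
  assume "\<not> (a = c \<and> al = ga)"
  then have "cf_inner d (theta d a al) (theta d c ga) = 0" using ortho[OF d a c al ga] by simp
  moreover have "cf_inner d (theta d a al) (theta d a al) = 1" using ortho[OF d a a al al] by simp
  ultimately show False using eq by simp
qed



definition V :: "nat \<Rightarrow> (nat \<times> nat) set" where
  "V d = Sigma (idx d) (\<lambda>a. {..<s_idx d a})"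

lemma V_iff: "(a, al) \<in> V d \<longleftrightarrow> a \<in> idx d \<and> al < s_idx d a"
  unfolding V_def by auto

lemma finite_V: "finite (V d)"
  unfolding V_def idx_def by auto

lemma Irr_V: "Irr d = (\<lambda>(a, al). theta d a al) ` V d"
  unfolding Irr_def V_def by auto

lemma dvd_small: "(d::nat) \<ge> 1 \<Longrightarrow> x \<le> d \<Longrightarrow> d dvd x \<longleftrightarrow> x = 0 \<or> x = d"
proof
  assume "d \<ge> 1" "x \<le> d" "d dvd x"
  then obtain k where "x = d * k" by auto
  then show "x = 0 \<or> x = d" using \<open>x \<le> d\<close> \<open>d \<ge> 1\<close>
    by (cases k) auto
qed auto

lemma r1_set:
  assumes d: "d \<ge> 1"
  shows "{a \<in> idx d. r_idx d a = 1} = (if even d then {0, d div 2} else {0})"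
proof -
  have "{a \<in> idx d. r_idx d a = 1} = {a. a \<le> d div 2 \<and> (2 * a = 0 \<or> 2 * a = d)}"
    unfolding idx_def r1_iff using dvd_small[OF d] by auto
  also have "\<dots> = (if even d then {0, d div 2} else {0})"
    by (auto elim!: evenE)
  finally show ?thesis .
qed

lemma sum_r: assumes d: "d \<ge> 1" shows "(\<Sum>a\<in>idx d. r_idx d a) = d"
proof -
  have fin: "finite (idx d)" by (simp add: idx_def)
  have "(\<Sum>a\<in>idx d. r_idx d a + (if r_idx d a = 1 then 1 else 0)) = (\<Sum>a\<in>idx d. 2)"
    using r_idx_cases by (intro sum.cong) auto
  also have "\<dots> = 2 * (d div 2 + 1)" unfolding idx_def by simp
  finally have e: "(\<Sum>a\<in>idx d. r_idx d a) + card {a \<in> idx d. r_idx d a = 1} = 2 * (d div 2 + 1)"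
    using fin by (simp add: sum.distrib sum.If_cases Int_def)
  show ?thesis
  proof (cases "even d")
    case True
    then have "d div 2 \<noteq> 0" using d by auto
    then have "card {a \<in> idx d. r_idx d a = 1} = 2" using r1_set[OF d] True by simp
    then show ?thesis using e True by auto
  next
    case False
    then have "card {a \<in> idx d. r_idx d a = 1} = 1" using r1_set[OF d] by simp
    then show ?thesis using e False by presburger
  qed
qed

lemma sumV: assumes d: "d \<ge> 1" shows "(\<Sum>p\<in>V d. r_idx d (fst p) ^ 2) = 2 * d"
proof -
  have "(\<Sum>p\<in>V d. r_idx d (fst p) ^ 2) = (\<Sum>a\<in>idx d. \<Sum>al<s_idx d a. r_idx d a ^ 2)"
    unfolding V_def by (subst sum.Sigma) (auto simp: idx_def case_prod_beta)
  also have "\<dots> = (\<Sum>a\<in>idx d. 2 * r_idx d a)"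
  proof (intro sum.cong refl)
    fix a show "(\<Sum>al<s_idx d a. r_idx d a ^ 2) = 2 * r_idx d a"
      using r_idx_cases[of d a] by (auto simp: s_idx_r)
  qed
  also have "\<dots> = 2 * d" using sum_r[OF d] by (simp add: sum_distrib_left[symmetric])
  finally show ?thesis .
qed



definition Cnd :: "nat \<Rightarrow> nat \<Rightarrow> nat \<Rightarrow> nat \<Rightarrow> nat \<Rightarrow> nat \<Rightarrow> bool" where
  "Cnd d a al b be ga \<longleftrightarrow> (al + be) mod gcd (s_idx d a) (s_idx d b) = ga mod gcd (s_idx d a) (s_idx d b)"

definition Kv :: "nat \<Rightarrow> nat \<Rightarrow> nat \<Rightarrow> nat \<Rightarrow> nat \<Rightarrow> nat \<Rightarrow> nat \<Rightarrow> nat" where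
  "Kv d a al b be c ga = r_idx d a * gcd (r_idx d a) (r_idx d b) * Nc d a b c * (if Cnd d a al b be ga then 1 else 0)"

lemma r_pos: "r_idx d a > 0" using r_idx_cases[of d a] by auto

lemma wcq_weight_val: "d \<ge> 1 \<Longrightarrow> wcq_weight (theta d a al) = of_nat (r_idx d a ^ 2)"
  unfolding wcq_weight_def char_deg_theta by simp

lemma wcq_mult_val:
  assumes d: "d \<ge> 1" and c: "c \<in> idx d"
    and al: "al < s_idx d a" and be: "be < s_idx d b" and ga: "ga < s_idx d c"
  shows "wcq_mult d (theta d a al) (theta d b be) (theta d c ga) = of_nat (r_idx d c * Kv d a al b be c ga)"
proof -
  have "wcq_mult d (theta d a al) (theta d b be) (theta d c ga) =
     of_nat (r_idx d a) * of_nat (r_idx d c) * (of_nat (r_idx d b) * cf_inner d (\<lambda>g. theta d a al g * theta d b be g) (theta d c ga))"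
    unfolding wcq_mult_def char_deg_theta[OF d] by (simp add: algebra_simps)
  also have "\<dots> = of_nat (r_idx d c * Kv d a al b be c ga)"
    unfolding key[OF d c al be ga] Kv_def Cnd_def by (simp add: algebra_simps)
  finally show ?thesis .
qed

lemma fiber_sum:
  assumes "finite A" "finite B" "finite C"
  shows "card {(x, y). x \<in> A \<and> y \<in> B \<and> m x y \<in> C} = (\<Sum>q\<in>C. card {(x, y). x \<in> A \<and> y \<in> B \<and> m x y = q})"
proof -
  have eq: "{(x, y). x \<in> A \<and> y \<in> B \<and> m x y \<in> C} = (\<Union>q\<in>C. {(x, y). x \<in> A \<and> y \<in> B \<and> m x y = q})"
    by auto
  have fin: "finite {(x, y). x \<in> A \<and> y \<in> B \<and> m x y = q}" for q
    by (rule finite_subset[of _ "A \<times> B"]) (use assms in auto)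
  show ?thesis unfolding eq
    by (rule card_UN_disjoint) (use assms fin in auto)
qed

lemma rhs_eval:
  assumes d: "d \<ge> 1"
    and disj: "\<forall>a \<in> idx d. \<forall>al < s_idx d a. \<forall>b \<in> idx d. \<forall>be < s_idx d b.
          (a, al) \<noteq> (b, be) \<longrightarrow> S a al \<inter> S b be = {}"
    and c: "c \<in> idx d" and ga: "ga < s_idx d c" and q: "q \<in> S c ga"
  shows "rhs_coeff d S a al b be q = of_nat (Kv d a al b be c ga) / of_nat (r_idx d c)"
proof -
  have inner: "(\<Sum>ga' \<in> {ga'. ga' < s_idx d c' \<and> (al + be) mod gcd (s_idx d a) (s_idx d b) = ga' mod gcd (s_idx d a) (s_idx d b)}.
             (if q \<in> S c' ga' then 1 else 0) / (of_nat (r_idx d c') :: rat))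
      = (if c' = c \<and> Cnd d a al b be ga then 1 / of_nat (r_idx d c) else 0)" if c': "c' \<in> idx d" for c'
  proof -
    let ?G = "{ga'. ga' < s_idx d c' \<and> (al + be) mod gcd (s_idx d a) (s_idx d b) = ga' mod gcd (s_idx d a) (s_idx d b)}"
    have finG: "finite ?G" by auto
    have "(\<Sum>ga' \<in> ?G. (if q \<in> S c' ga' then 1 else 0) / (of_nat (r_idx d c') :: rat))
      = (\<Sum>ga' \<in> ?G. if ga = ga' then (if c' = c then 1 / of_nat (r_idx d c) else 0) else 0)"
    proof (intro sum.cong refl)
      fix ga' assume "ga' \<in> ?G"
      then have g': "ga' < s_idx d c'" by auto
      have "q \<in> S c' ga' \<longleftrightarrow> (c', ga') = (c, ga)"
        using disj c c' ga g' q by blast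
      then show "(if q \<in> S c' ga' then 1 else 0) / (of_nat (r_idx d c') :: rat)
          = (if ga = ga' then (if c' = c then 1 / of_nat (r_idx d c) else 0) else 0)" by auto
    qed
    also have "\<dots> = (if c' = c \<and> Cnd d a al b be ga then 1 / of_nat (r_idx d c) else 0)"
      using finG ga unfolding Cnd_def sum.delta[OF finG] by auto
    finally show ?thesis .
  qed
  have "rhs_coeff d S a al b be q = of_nat (r_idx d a * gcd (r_idx d a) (r_idx d b)) *
     (\<Sum>i < r_idx d b. (if bar d (int a + int b * (-1) ^ i) = c \<and> Cnd d a al b be ga then 1 / of_nat (r_idx d c) else 0))"
    unfolding rhs_coeff_def Let_def using inner bar_in_idx[OF d] by simp
  also have "\<dots> = of_nat (r_idx d a * gcd (r_idx d a) (r_idx d b)) *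
     (of_nat (Nc d a b c * (if Cnd d a al b be ga then 1 else 0)) / of_nat (r_idx d c))"
  proof -
    have "(\<Sum>i < r_idx d b. (if bar d (int a + int b * (-1) ^ i) = c then 1 / of_nat (r_idx d c) else (0::rat)))
      = (\<Sum>i < r_idx d b. of_nat (if bar d (int a + int b * (-1) ^ i) = c then 1 else 0)) / of_nat (r_idx d c)"
      unfolding sum_divide_distrib by (intro sum.cong) auto
    then show ?thesis unfolding Nc_def by (auto simp: of_nat_sum)
  qed
  also have "\<dots> = of_nat (Kv d a al b be c ga) / of_nat (r_idx d c)"
    unfolding Kv_def by (simp add: algebra_simps)
  finally show ?thesis .
qed



lemma rat_div_iff: "(r::nat) > 0 \<Longrightarrow> (of_nat P = (of_nat K / of_nat r :: rat)) \<longleftrightarrow> r * P = K"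
proof -
  assume r: "r > 0"
  have "(of_nat P = (of_nat K / of_nat r :: rat)) \<longleftrightarrow> of_nat r * of_nat P = (of_nat K :: rat)"
    using r by (auto simp: field_simps)
  also have "\<dots> \<longleftrightarrow> r * P = K" by (metis of_nat_eq_iff of_nat_mult)
  finally show ?thesis .
qed

lemma forward:
  fixes d :: nat and Q :: "'q set" and m :: "'q \<Rightarrow> 'q \<Rightarrow> 'q"
  assumes d: "d \<ge> 1"
    and fin: "finite Q" and qg: "quasigroup Q m" and cQ: "card Q = 2 * d"
    and cov: "is_cover d Q m f" and bal: "is_balanced Q m f (Irr d)"
  shows "\<exists>S :: nat \<Rightarrow> nat \<Rightarrow> 'q set.
       (\<forall>a \<in> idx d. \<forall>al < s_idx d a. S a al \<subseteq> Q \<and> card (S a al) = r_idx d a ^ 2) \<and>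
       (\<forall>a \<in> idx d. \<forall>al < s_idx d a. \<forall>b \<in> idx d. \<forall>be < s_idx d b.
          (a, al) \<noteq> (b, be) \<longrightarrow> S a al \<inter> S b be = {}) \<and>
       (\<forall>a \<in> idx d. \<forall>al < s_idx d a. \<forall>b \<in> idx d. \<forall>be < s_idx d b. \<forall>q \<in> Q.
          of_nat (set_prod_coeff m (S a al) (S b be) q) = rhs_coeff d S a al b be q)"
proof -
  have closed: "\<And>x y. x \<in> Q \<Longrightarrow> y \<in> Q \<Longrightarrow> m x y \<in> Q" using qg unfolding quasigroup_def by blast
  have cov1: "f ` Q = Irr d"
    and cov2: "\<And>th. th \<in> Irr d \<Longrightarrow> of_nat (card {q \<in> Q. f q = th}) = wcq_weight th"
    and cov3: "\<And>ti tj tk. ti \<in> Irr d \<Longrightarrow> tj \<in> Irr d \<Longrightarrow> tk \<in> Irr d \<Longrightarrow>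
        of_nat (card {(a, b). a \<in> Q \<and> b \<in> Q \<and> f a = ti \<and> f b = tj \<and> f (m a b) = tk})
          = wcq_mult d ti tj tk"
    using cov unfolding is_cover_def by auto
  have bal': "\<And>ti tj q q'. ti \<in> Irr d \<Longrightarrow> tj \<in> Irr d \<Longrightarrow> q \<in> Q \<Longrightarrow> q' \<in> Q \<Longrightarrow> f q = f q' \<Longrightarrow>
        card {(a, b). a \<in> Q \<and> b \<in> Q \<and> f a = ti \<and> f b = tj \<and> m a b = q}
      = card {(a, b). a \<in> Q \<and> b \<in> Q \<and> f a = ti \<and> f b = tj \<and> m a b = q'}"
    using bal unfolding is_balanced_def by blast
  have thIrr: "\<And>a al. a \<in> idx d \<Longrightarrow> al < s_idx d a \<Longrightarrow> theta d a al \<in> Irr d"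
    unfolding Irr_def by blast
  define S where "S a al = {q \<in> Q. f q = theta d a al}" for a al
  have SQ: "S a al \<subseteq> Q" for a al unfolding S_def by auto
  have finS: "finite (S a al)" for a al using SQ fin finite_subset by blast
  have cardS: "card (S a al) = r_idx d a ^ 2" if "a \<in> idx d" "al < s_idx d a" for a al
  proof -
    have "(of_nat (card (S a al)) :: complex) = of_nat (r_idx d a ^ 2)"
      unfolding S_def using cov2[OF thIrr[OF that]] wcq_weight_val[OF d] by simp
    then show ?thesis by (metis of_nat_eq_iff)
  qed
  have disj: "\<forall>a \<in> idx d. \<forall>al < s_idx d a. \<forall>b \<in> idx d. \<forall>be < s_idx d b.
          (a, al) \<noteq> (b, be) \<longrightarrow> S a al \<inter> S b be = {}"
  proof (intro ballI allI impI)
    fix a al b be assume h: "a \<in> idx d" "al < s_idx d a" "b \<in> idx d" "be < s_idx d b" "(a, al) \<noteq> (b, be)"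
    then have "theta d a al \<noteq> theta d b be" using theta_inj[OF d, of a b al be] by auto
    then show "S a al \<inter> S b be = {}" unfolding S_def by auto
  qed
  have prod: "of_nat (set_prod_coeff m (S a al) (S b be) q) = rhs_coeff d S a al b be q"
    if a: "a \<in> idx d" and al: "al < s_idx d a" and b: "b \<in> idx d" and be: "be < s_idx d b" and q: "q \<in> Q"
    for a al b be q
  proof -
    have "f q \<in> Irr d" using cov1 q by blast
    then obtain c ga where c: "c \<in> idx d" and ga: "ga < s_idx d c" and fq: "f q = theta d c ga"
      unfolding Irr_def by blast
    have qS: "q \<in> S c ga" unfolding S_def using q fq by simp
    define P where "P q' = card {(x, y). x \<in> S a al \<and> y \<in> S b be \<and> m x y = q'}" for q'
    have setEq: "{(x, y). x \<in> Q \<and> y \<in> Q \<and> f x = theta d a al \<and> f y = theta d b be \<and> m x y = q'}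
        = {(x, y). x \<in> S a al \<and> y \<in> S b be \<and> m x y = q'}" for q'
      unfolding S_def by auto
    have Pc: "P q' = P q" if "q' \<in> S c ga" for q'
      using bal'[OF thIrr[OF a al] thIrr[OF b be], of q' q] that q fq unfolding P_def setEq
      unfolding S_def by auto
    have setEq3: "{(x, y). x \<in> Q \<and> y \<in> Q \<and> f x = theta d a al \<and> f y = theta d b be \<and> f (m x y) = theta d c ga}
        = {(x, y). x \<in> S a al \<and> y \<in> S b be \<and> m x y \<in> S c ga}"
      unfolding S_def using closed by auto
    have "card {(x, y). x \<in> S a al \<and> y \<in> S b be \<and> m x y \<in> S c ga} = (\<Sum>q'\<in>S c ga. P q')"
      unfolding P_def by (rule fiber_sum[OF finS finS finS])
    also have "\<dots> = r_idx d c ^ 2 * P q" using Pc cardS[OF c ga] by simp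
    finally have "(of_nat (r_idx d c ^ 2 * P q) :: complex) = of_nat (r_idx d c * Kv d a al b be c ga)"
      using cov3[OF thIrr[OF a al] thIrr[OF b be] thIrr[OF c ga]] wcq_mult_val[OF d c al be ga]
      unfolding setEq3 by simp
    then have "r_idx d c ^ 2 * P q = r_idx d c * Kv d a al b be c ga" by (metis of_nat_eq_iff)
    then have "r_idx d c * P q = Kv d a al b be c ga" using r_pos[of d c] by (simp add: power2_eq_square)
    then have "of_nat (P q) = (of_nat (Kv d a al b be c ga) / of_nat (r_idx d c) :: rat)"
      using rat_div_iff[OF r_pos] by blast
    then show ?thesis unfolding rhs_eval[OF d disj c ga qS] set_prod_coeff_def P_def .
  qed
  show ?thesis
    by (rule exI[of _ S]) (use SQ cardS disj prod in auto)
qed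



lemma backward:
  fixes d :: nat and Q :: "'q set" and m :: "'q \<Rightarrow> 'q \<Rightarrow> 'q" and S :: "nat \<Rightarrow> nat \<Rightarrow> 'q set"
  assumes d: "d \<ge> 1"
    and fin: "finite Q" and qg: "quasigroup Q m" and cQ: "card Q = 2 * d"
    and S1: "\<forall>a \<in> idx d. \<forall>al < s_idx d a. S a al \<subseteq> Q \<and> card (S a al) = r_idx d a ^ 2"
    and disj: "\<forall>a \<in> idx d. \<forall>al < s_idx d a. \<forall>b \<in> idx d. \<forall>be < s_idx d b.
          (a, al) \<noteq> (b, be) \<longrightarrow> S a al \<inter> S b be = {}"
    and S3: "\<forall>a \<in> idx d. \<forall>al < s_idx d a. \<forall>b \<in> idx d. \<forall>be < s_idx d b. \<forall>q \<in> Q.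
          of_nat (set_prod_coeff m (S a al) (S b be) q) = rhs_coeff d S a al b be q"
  shows "balanced_cover_dihedral d Q m"
proof -
  have closed: "\<And>x y. x \<in> Q \<Longrightarrow> y \<in> Q \<Longrightarrow> m x y \<in> Q" using qg unfolding quasigroup_def by blast
  define SS where "SS p = S (fst p) (snd p)" for p
  have SQ: "SS p \<subseteq> Q" if "p \<in> V d" for p
  proof -
    obtain a al where p: "p = (a, al)" by (cases p)
    show ?thesis using S1 that unfolding p SS_def V_iff by simp
  qed
  have finS: "\<And>p. p \<in> V d \<Longrightarrow> finite (SS p)" using SQ fin finite_subset by blast
  have cardSS: "card (SS p) = r_idx d (fst p) ^ 2" if "p \<in> V d" for p
  proof -
    obtain a al where p: "p = (a, al)" by (cases p)
    show ?thesis using S1 that unfolding p SS_def V_iff by simp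
  qed
  have U: "(\<Union>p\<in>V d. SS p) = Q"
  proof (rule card_subset_eq[OF fin])
    show "(\<Union>p\<in>V d. SS p) \<subseteq> Q" using SQ by blast
    have "card (\<Union>p\<in>V d. SS p) = (\<Sum>p\<in>V d. card (SS p))"
    proof (rule card_UN_disjoint[OF finite_V])
      show "\<forall>i\<in>V d. finite (SS i)" using finS by blast
      show "\<forall>i\<in>V d. \<forall>j\<in>V d. i \<noteq> j \<longrightarrow> SS i \<inter> SS j = {}"
        using disj unfolding V_def SS_def by auto
    qed
    also have "\<dots> = 2 * d" using sumV[OF d] cardSS by simp
    finally show "card (\<Union>p\<in>V d. SS p) = card Q" using cQ by simp
  qed
  define g where "g q = (SOME p. p \<in> V d \<and> q \<in> SS p)" for q
  define f where "f q = theta d (fst (g q)) (snd (g q))" for q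
  have g: "g q \<in> V d \<and> q \<in> SS (g q)" if "q \<in> Q" for q
  proof -
    have "\<exists>p. p \<in> V d \<and> q \<in> SS p" using U that by blast
    then show ?thesis unfolding g_def by (rule someI_ex)
  qed
  have memS: "f q = theta d c ga \<longleftrightarrow> q \<in> S c ga" if q: "q \<in> Q" and cg: "(c, ga) \<in> V d" for q c ga
  proof
    obtain c' ga' where gq: "g q = (c', ga')" by (cases "g q")
    have c': "(c', ga') \<in> V d" "q \<in> S c' ga'" using g[OF q] unfolding gq SS_def by auto
    have fq: "f q = theta d c' ga'" unfolding f_def gq by simp
    {
      assume "f q = theta d c ga"
      then have "c' = c \<and> ga' = ga" using theta_inj[OF d, of c' c ga' ga] c' cg fq unfolding V_iff by auto
      then show "q \<in> S c ga" using c' by simp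
    next
      assume "q \<in> S c ga"
      then have "(c', ga') = (c, ga)" using disj c' cg unfolding V_iff by blast
      then show "f q = theta d c ga" using fq by simp
    }
  qed
  have Irr_ex: "\<And>th. th \<in> Irr d \<Longrightarrow> \<exists>c ga. (c, ga) \<in> V d \<and> th = theta d c ga"
    unfolding Irr_V by auto
  have fibre: "{q \<in> Q. f q = theta d c ga} = S c ga" if "(c, ga) \<in> V d" for c ga
    using memS[OF _ that] SQ[OF that] unfolding SS_def by auto
  have Kprop: "r_idx d c * set_prod_coeff m (S a al) (S b be) q = Kv d a al b be c ga"
    if "(a, al) \<in> V d" "(b, be) \<in> V d" "(c, ga) \<in> V d" "q \<in> S c ga" for a al b be c ga q
  proof -
    have "q \<in> Q" using that SQ unfolding SS_def by fastforce
    then have "of_nat (set_prod_coeff m (S a al) (S b be) q) = rhs_coeff d S a al b be q"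
      using S3 that unfolding V_iff by blast
    also have "\<dots> = of_nat (Kv d a al b be c ga) / of_nat (r_idx d c)"
      using rhs_eval[OF d disj, of c ga q a al b be] that unfolding V_iff by blast
    finally show ?thesis using rat_div_iff[OF r_pos] by blast
  qed
  have cover: "is_cover d Q m f"
    unfolding is_cover_def
  proof (intro conjI ballI)
    show "f ` Q = Irr d"
    proof
      show "f ` Q \<subseteq> Irr d" unfolding f_def Irr_V using g by fastforce
      show "Irr d \<subseteq> f ` Q"
      proof
        fix th assume "th \<in> Irr d"
        then obtain c ga where cg: "(c, ga) \<in> V d" and th: "th = theta d c ga" using Irr_ex by blast
        have "card (S c ga) > 0" using cardSS[OF cg] r_pos[of d c] unfolding SS_def by simp
        then obtain q where q: "q \<in> S c ga" by (metis card_gt_0_iff ex_in_conv)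
        then have qQ: "q \<in> Q" using SQ[OF cg] unfolding SS_def by auto
        then have "f q = th" using memS[OF qQ cg] q th by simp
        then show "th \<in> f ` Q" using qQ by blast
      qed
    qed
  next
    fix th assume "th \<in> Irr d"
    then obtain c ga where cg: "(c, ga) \<in> V d" and th: "th = theta d c ga" using Irr_ex by blast
    show "of_nat (card {q \<in> Q. f q = th}) = wcq_weight th"
      unfolding th fibre[OF cg] wcq_weight_val[OF d] using cardSS[OF cg] unfolding SS_def by simp
  next
    fix ti tj tk assume "ti \<in> Irr d" "tj \<in> Irr d" "tk \<in> Irr d"
    then obtain a al b be c ga where ab: "(a, al) \<in> V d" "(b, be) \<in> V d" "(c, ga) \<in> V d"
      and t: "ti = theta d a al" "tj = theta d b be" "tk = theta d c ga" using Irr_ex by metis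
    have sQ: "S a al \<subseteq> Q" "S b be \<subseteq> Q" "S c ga \<subseteq> Q" using SQ[OF ab(1)] SQ[OF ab(2)] SQ[OF ab(3)] unfolding SS_def by auto
    have setEq3: "{(x, y). x \<in> Q \<and> y \<in> Q \<and> f x = ti \<and> f y = tj \<and> f (m x y) = tk}
        = {(x, y). x \<in> S a al \<and> y \<in> S b be \<and> m x y \<in> S c ga}"
      unfolding t using memS ab closed sQ by blast
    have fS: "finite (S a al)" "finite (S b be)" "finite (S c ga)"
      using finS ab unfolding SS_def by auto
    have "card {(x, y). x \<in> S a al \<and> y \<in> S b be \<and> m x y \<in> S c ga}
       = (\<Sum>q\<in>S c ga. set_prod_coeff m (S a al) (S b be) q)"
      unfolding set_prod_coeff_def by (rule fiber_sum[OF fS])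
    moreover have "r_idx d c * (\<Sum>q\<in>S c ga. set_prod_coeff m (S a al) (S b be) q)
        = r_idx d c * (r_idx d c * Kv d a al b be c ga)"
    proof -
      have "r_idx d c * (\<Sum>q\<in>S c ga. set_prod_coeff m (S a al) (S b be) q)
          = (\<Sum>q\<in>S c ga. r_idx d c * set_prod_coeff m (S a al) (S b be) q)"
        by (simp add: sum_distrib_left)
      also have "\<dots> = (\<Sum>q\<in>S c ga. Kv d a al b be c ga)"
        using Kprop[OF ab] by simp
      also have "\<dots> = r_idx d c * (r_idx d c * Kv d a al b be c ga)"
        using cardSS[OF ab(3)] unfolding SS_def by (simp add: power2_eq_square)
      finally show ?thesis .
    qed
    ultimately have "card {(x, y). x \<in> Q \<and> y \<in> Q \<and> f x = ti \<and> f y = tj \<and> f (m x y) = tk}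
        = r_idx d c * Kv d a al b be c ga"
      unfolding setEq3 using r_pos[of d c] by simp
    then show "of_nat (card {(x, y). x \<in> Q \<and> y \<in> Q \<and> f x = ti \<and> f y = tj \<and> f (m x y) = tk})
        = wcq_mult d ti tj tk"
      unfolding t using wcq_mult_val[OF d] ab unfolding V_iff by simp
  qed
  have balanced: "is_balanced Q m f (Irr d)"
    unfolding is_balanced_def
  proof (intro ballI impI)
    fix ti tj q q' assume "ti \<in> Irr d" "tj \<in> Irr d" and q: "q \<in> Q" "q' \<in> Q" and fq: "f q = f q'"
    then obtain a al b be where ab: "(a, al) \<in> V d" "(b, be) \<in> V d"
      and t: "ti = theta d a al" "tj = theta d b be" using Irr_ex by metis
    obtain c ga where gq: "g q = (c, ga)" by (cases "g q")
    have cg: "(c, ga) \<in> V d" using g[OF q(1)] gq by auto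
    have fc: "f q = theta d c ga" unfolding f_def gq by simp
    have qs: "q \<in> S c ga" "q' \<in> S c ga" using memS[OF q(1) cg] memS[OF q(2) cg] fc fq by auto
    have sQ: "S a al \<subseteq> Q" "S b be \<subseteq> Q" using SQ[OF ab(1)] SQ[OF ab(2)] unfolding SS_def by auto
    have setEq: "{(x, y). x \<in> Q \<and> y \<in> Q \<and> f x = ti \<and> f y = tj \<and> m x y = p}
        = {(x, y). x \<in> S a al \<and> y \<in> S b be \<and> m x y = p}" for p
      unfolding t using memS ab sQ by blast
    have "r_idx d c * set_prod_coeff m (S a al) (S b be) q = r_idx d c * set_prod_coeff m (S a al) (S b be) q'"
      using Kprop[OF ab cg qs(1)] Kprop[OF ab cg qs(2)] by simp
    then have "set_prod_coeff m (S a al) (S b be) q = set_prod_coeff m (S a al) (S b be) q'"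
      using r_pos[of d c] by simp
    then show "card {(x, y). x \<in> Q \<and> y \<in> Q \<and> f x = ti \<and> f y = tj \<and> m x y = q}
      = card {(x, y). x \<in> Q \<and> y \<in> Q \<and> f x = ti \<and> f y = tj \<and> m x y = q'}"
      unfolding setEq set_prod_coeff_def .
  qed
  show ?thesis unfolding balanced_cover_dihedral_def using cover balanced by blast
qed


theorem mainTheorem4:
  fixes d :: nat and Q :: "'q set" and m :: "'q \<Rightarrow> 'q \<Rightarrow> 'q"
  assumes "d \<ge> 1"
    and "finite Q" and "quasigroup Q m" and "card Q = 2 * d"
  shows "balanced_cover_dihedral d Q m \<longleftrightarrow>
    (\<exists>S :: nat \<Rightarrow> nat \<Rightarrow> 'q set.
       (\<forall>a \<in> idx d. \<forall>al < s_idx d a. S a al \<subseteq> Q \<and> card (S a al) = r_idx d a ^ 2) \<and>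
       (\<forall>a \<in> idx d. \<forall>al < s_idx d a. \<forall>b \<in> idx d. \<forall>be < s_idx d b.
          (a, al) \<noteq> (b, be) \<longrightarrow> S a al \<inter> S b be = {}) \<and>
       (\<forall>a \<in> idx d. \<forall>al < s_idx d a. \<forall>b \<in> idx d. \<forall>be < s_idx d b. \<forall>q \<in> Q.
          of_nat (set_prod_coeff m (S a al) (S b be) q) = rhs_coeff d S a al b be q))"
proof
  assume "balanced_cover_dihedral d Q m"
  then obtain f where "is_cover d Q m f" "is_balanced Q m f (Irr d)"
    unfolding balanced_cover_dihedral_def by blast
  then show "\<exists>S :: nat \<Rightarrow> nat \<Rightarrow> 'q set.
       (\<forall>a \<in> idx d. \<forall>al < s_idx d a. S a al \<subseteq> Q \<and> card (S a al) = r_idx d a ^ 2) \<and>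
       (\<forall>a \<in> idx d. \<forall>al < s_idx d a. \<forall>b \<in> idx d. \<forall>be < s_idx d b.
          (a, al) \<noteq> (b, be) \<longrightarrow> S a al \<inter> S b be = {}) \<and>
       (\<forall>a \<in> idx d. \<forall>al < s_idx d a. \<forall>b \<in> idx d. \<forall>be < s_idx d b. \<forall>q \<in> Q.
          of_nat (set_prod_coeff m (S a al) (S b be) q) = rhs_coeff d S a al b be q)"
    by (rule forward[OF assms])
next
  assume "\<exists>S :: nat \<Rightarrow> nat \<Rightarrow> 'q set.
       (\<forall>a \<in> idx d. \<forall>al < s_idx d a. S a al \<subseteq> Q \<and> card (S a al) = r_idx d a ^ 2) \<and>
       (\<forall>a \<in> idx d. \<forall>al < s_idx d a. \<forall>b \<in> idx d. \<forall>be < s_idx d b.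
          (a, al) \<noteq> (b, be) \<longrightarrow> S a al \<inter> S b be = {}) \<and>
       (\<forall>a \<in> idx d. \<forall>al < s_idx d a. \<forall>b \<in> idx d. \<forall>be < s_idx d b. \<forall>q \<in> Q.
          of_nat (set_prod_coeff m (S a al) (S b be) q) = rhs_coeff d S a al b be q)"
  then show "balanced_cover_dihedral d Q m"
    by (elim exE conjE) (rule backward[OF assms])
qed

end
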